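(* Let $k\geq 2$ be an integer and let $F_k(x,t)=\sum_{n\geq 0}\sum_{w\in[k]^n} t^{\mathrm{s}(w)}x^n$. Put $\phi=\dfrac{1-x(t-1)}{2x(t-1)}$ and \[\gamma(x,t)=\frac{k}{1-3x(t-1)}-\frac{2x(t-1)}{(1-3x(t-1))^{2}}\cdot\frac{U_{k}(\phi)-U_{k-1}(\phi)-1}{U_{k}(\phi)}.\] Then \[F_k(x,t)=\frac{1}{1-x\gamma(x,t)}.\]
   Context: For an integer $k\geq 2$, $[k]=\{1,2,\ldots,k\}$ and a word over $k$ of length $n$ is an element $w=w_1\cdots w_n\in[k]^n$ ($[k]^0$ consists of the empty word). For such $w$, $\mathrm{s}(w)$ is the number of indices $1\leq i\leq n-1$ with $|w_{i+1}-w_i|\leq 1$ (so $\mathrm{s}(w)=0$ if $n\leq 1$). $U_n$ denotes the Chebyshev polynomial of the second kind: $U_0(x)=1$, $U_1(x)=2x$, $U_{n+1}(x)=2xU_n(x)-U_{n-1}(x)$. The identity is an identity of rational functions in $x,t$ (equivalently of formal power series in $x$ with coefficients polynomial in $t$). *)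

theory Defs
  imports "HOL-Computational_Algebra.Computational_Algebra"
begin

definition words :: "nat \<Rightarrow> nat \<Rightarrow> nat list set" where
  "words k n = {w. length w = n \<and> set w \<subseteq> {1..k}}"

text \<open>s(w): number of indices i (1 \<le> i \<le> n-1) with |w_(i+1) - w_i| \<le> 1 (0-based here).\<close>
definition sstat :: "nat list \<Rightarrow> nat" where
  "sstat w = card {i. i + 1 < length w \<and> \<bar>int (w ! (i+1)) - int (w ! i)\<bar> \<le> 1}"

fun chebU :: "nat \<Rightarrow> 'a::comm_ring_1 \<Rightarrow> 'a" where
  "chebU 0 z = 1"
| "chebU (Suc 0) z = 2 * z"
| "chebU (Suc (Suc n)) z = 2 * z * chebU (Suc n) z - chebU n z"

type_synonym ratfun = "real poly fract"

definition tvar :: ratfun where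
  "tvar = Fract [:0, 1:] 1"

definition Fk :: "nat \<Rightarrow> ratfun fls" where
  "Fk k = fps_to_fls (Abs_fps (\<lambda>n. \<Sum>w\<in>words k n. tvar ^ sstat w))"

end

theory Submission imports Defs begin
lemma tvar_ne1: "tvar \<noteq> 1" unfolding tvar_def by (simp add: One_fract_def eq_fract one_pCons)

lemma finite_words: "finite (words k n)"
proof -
  have "words k n = {xs. set xs \<subseteq> {1..k} \<and> length xs = n}" unfolding words_def by auto
  thus ?thesis using finite_lists_length_eq[of "{1..k}" n] by simp
qed

lemma words_0: "words k 0 = {[]}" unfolding words_def by auto

lemma words_Suc: "words k (Suc n) = (\<lambda>(i,w). i # w) ` ({1..k} \<times> words k n)"
  unfolding words_def by (auto simp: length_Suc_conv image_iff)

lemma sstat_Nil: "sstat [] = 0" unfolding sstat_def by simp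
lemma sstat_single: "sstat [a] = 0" unfolding sstat_def by simp

lemma sstat_Cons2: "sstat (a # b # w) = sstat (b # w) + (if \<bar>int b - int a\<bar> \<le> 1 then 1 else 0)"
proof -
  let ?P = "\<lambda>l i. i + 1 < length l \<and> \<bar>int (l ! (i+1)) - int (l ! i)\<bar> \<le> 1"
  have eq: "{i. ?P (a#b#w) i} = Suc ` {i. ?P (b#w) i} \<union> (if \<bar>int b - int a\<bar> \<le> 1 then {0} else {})"
    apply (auto simp: image_iff split: if_splits)
    apply (case_tac x; auto)+
    done
  have fin: "finite {i. ?P (b#w) i}" by (rule finite_subset[of _ "{..<length (b#w)}"]) auto
  show ?thesis unfolding sstat_def eq
    using fin by (auto simp: card_image)
qed

lemma sstat_Cons_nonempty: "w \<noteq> [] \<Longrightarrow> sstat (a # w) = sstat w + (if \<bar>int (hd w) - int a\<bar> \<le> 1 then 1 else 0)"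
  by (cases w) (auto simp: sstat_Cons2)

definition cc :: "nat \<Rightarrow> nat \<Rightarrow> nat \<Rightarrow> ratfun" where
  "cc k i n = (\<Sum>w\<in>words k n. if w \<noteq> [] \<and> hd w = i then tvar ^ sstat w else 0)"
definition aa :: "nat \<Rightarrow> nat \<Rightarrow> ratfun" where
  "aa k n = (\<Sum>w\<in>words k n. tvar ^ sstat w)"

lemma sum_words_Suc:
  "(\<Sum>w\<in>words k (Suc n). g w) = (\<Sum>i\<in>{1..k}. \<Sum>w\<in>words k n. g (i # w))"
proof -
  have inj: "inj_on (\<lambda>(i,w). i # w) ({1..k} \<times> words k n)" by (auto simp: inj_on_def)
  have "(\<Sum>w\<in>words k (Suc n). g w) = (\<Sum>p\<in>{1..k} \<times> words k n. g ((\<lambda>(i,w). i # w) p))"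
    unfolding words_Suc by (subst sum.reindex[OF inj]) simp
  also have "\<dots> = (\<Sum>i\<in>{1..k}. \<Sum>w\<in>words k n. g (i # w))"
    by (subst sum.cartesian_product) (rule sum.cong, auto)
  finally show ?thesis .
qed

lemma cc_0: "cc k i 0 = 0" unfolding cc_def words_0 by simp
lemma aa_0: "aa k 0 = 1" unfolding aa_def words_0 by (simp add: sstat_Nil)

lemma hd_words: "w \<in> words k n \<Longrightarrow> w \<noteq> [] \<Longrightarrow> hd w \<in> {1..k}"
  unfolding words_def using hd_in_set by blast

lemma cc_out: "i \<notin> {1..k} \<Longrightarrow> cc k i n = 0"
  unfolding cc_def by (rule sum.neutral) (auto dest: hd_words)

lemma cc_Suc_aux: assumes "i \<in> {1..k}" shows "cc k i (Suc n) = (\<Sum>w\<in>words k n. tvar ^ sstat (i # w))"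
proof -
  have "cc k i (Suc n) = (\<Sum>j\<in>{1..k}. \<Sum>w\<in>words k n. if j = i then tvar ^ sstat (j # w) else 0)"
    unfolding cc_def sum_words_Suc by simp
  also have "\<dots> = (\<Sum>w\<in>words k n. \<Sum>j\<in>{1..k}. if j = i then tvar ^ sstat (j # w) else 0)"
    by (rule sum.swap)
  also have "\<dots> = (\<Sum>w\<in>words k n. tvar ^ sstat (i # w))"
    using \<open>i \<in> {1..k}\<close> by (simp add: sum.delta')
  finally show ?thesis .
qed

lemma cc_Suc: assumes i: "i \<in> {1..k}"
  shows "cc k i (Suc n) = aa k n + (tvar - 1) * (cc k (i-1) n + cc k i n + cc k (i+1) n)"
proof (cases n)
  case 0
  show ?thesis using i unfolding 0 cc_Suc_aux[OF i] by (simp add: words_0 aa_0 cc_0 sstat_single)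
next
  case (Suc m)
  have ne: "w \<in> words k n \<Longrightarrow> w \<noteq> []" for w unfolding words_def Suc by auto
  have pw: "tvar ^ sstat (i # w) = tvar ^ sstat w + (tvar - 1) *
     ((if w \<noteq> [] \<and> hd w = i - 1 then tvar ^ sstat w else 0) +
      (if w \<noteq> [] \<and> hd w = i then tvar ^ sstat w else 0) +
      (if w \<noteq> [] \<and> hd w = i + 1 then tvar ^ sstat w else 0))" if "w \<noteq> []" for w
  proof -
    have "i \<ge> 1" using i by simp
    show ?thesis using that \<open>i \<ge> 1\<close>
      by (auto simp: sstat_Cons_nonempty algebra_simps)
  qed
  have "cc k i (Suc n) = (\<Sum>w\<in>words k n. tvar ^ sstat w + (tvar - 1) *
     ((if w \<noteq> [] \<and> hd w = i - 1 then tvar ^ sstat w else 0) +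
      (if w \<noteq> [] \<and> hd w = i then tvar ^ sstat w else 0) +
      (if w \<noteq> [] \<and> hd w = i + 1 then tvar ^ sstat w else 0)))"
    unfolding cc_Suc_aux[OF i] by (rule sum.cong) (auto simp: pw ne)
  also have "\<dots> = aa k n + (tvar - 1) * (cc k (i-1) n + cc k i n + cc k (i+1) n)"
    unfolding aa_def cc_def by (simp add: sum.distrib flip: sum_distrib_left)
  finally show ?thesis .
qed

lemma aa_Suc: "aa k (Suc n) = (\<Sum>i\<in>{1..k}. cc k i (Suc n))"
proof -
  have "(\<Sum>i\<in>{1..k}. cc k i (Suc n)) = (\<Sum>w\<in>words k (Suc n). \<Sum>i\<in>{1..k}. if w \<noteq> [] \<and> hd w = i then tvar ^ sstat w else 0)"
    unfolding cc_def by (rule sum.swap)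
  also have "\<dots> = aa k (Suc n)" unfolding aa_def
  proof (rule sum.cong)
    fix w assume w: "w \<in> words k (Suc n)"
    hence "w \<noteq> []" unfolding words_def by auto
    with hd_words[OF w] show "(\<Sum>i\<in>{1..k}. if w \<noteq> [] \<and> hd w = i then tvar ^ sstat w else 0) = tvar ^ sstat w"
      by (simp add: sum.delta)
  qed simp
  finally show ?thesis ..
qed

definition Gf :: "nat \<Rightarrow> nat \<Rightarrow> ratfun fps" where "Gf k i = Abs_fps (cc k i)"
definition Af :: "nat \<Rightarrow> ratfun fps" where "Af k = Abs_fps (aa k)"

lemma Gf_rec: assumes "i \<in> {1..k}"
  shows "Gf k i = fps_X * Af k + fps_X * fps_const (tvar - 1) * (Gf k (i-1) + Gf k i + Gf k (i+1))"
proof (rule fps_ext)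
  fix n show "Gf k i $ n = (fps_X * Af k + fps_X * fps_const (tvar - 1) * (Gf k (i-1) + Gf k i + Gf k (i+1))) $ n"
    using cc_Suc[OF assms] by (cases n) (simp_all add: Gf_def Af_def cc_0 mult.assoc)
qed

lemma Af_eq: "Af k = 1 + (\<Sum>i\<in>{1..k}. Gf k i)"
proof (rule fps_ext)
  fix n show "Af k $ n = (1 + (\<Sum>i\<in>{1..k}. Gf k i)) $ n"
    by (cases n) (simp_all add: Gf_def Af_def cc_0 aa_0 aa_Suc fps_sum_nth)
qed

lemma Fk_Af: "Fk k = fps_to_fls (Af k)" unfolding Fk_def Af_def aa_def ..

lemma fps_to_fls_sum: "fps_to_fls (\<Sum>i\<in>A. f i) = (\<Sum>i\<in>A. fps_to_fls (f i))"
  by (induction A rule: infinite_finite_induct) auto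

fun uu :: "ratfun fps \<Rightarrow> nat \<Rightarrow> ratfun fps" where
  "uu Y 0 = 1"
| "uu Y (Suc 0) = 1 - Y"
| "uu Y (Suc (Suc n)) = (1 - Y) * uu Y (Suc n) - Y^2 * uu Y n"

lemma uu_nth0: "Y $ 0 = 0 \<Longrightarrow> uu Y n $ 0 = 1"
  by (induction Y n rule: uu.induct) (simp_all add: power2_eq_square)

lemma cheb_scaled:
  fixes \<phi> :: "ratfun fls"
  assumes "2 * \<phi> * fps_to_fls Y = 1 - fps_to_fls Y"
  shows "fps_to_fls Y ^ n * chebU n \<phi> = fps_to_fls (uu Y n)"
proof -
  let ?y = "fps_to_fls Y"
  have "?y ^ n * chebU n \<phi> = fps_to_fls (uu Y n) \<and> ?y ^ Suc n * chebU (Suc n) \<phi> = fps_to_fls (uu Y (Suc n))"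
  proof (induction n)
    case 0 show ?case using assms by (simp add: algebra_simps)
  next
    case (Suc n)
    have "?y ^ Suc (Suc n) * chebU (Suc (Suc n)) \<phi> = (2 * \<phi> * ?y) * (?y ^ Suc n * chebU (Suc n) \<phi>) - ?y^2 * (?y ^ n * chebU n \<phi>)"
      by (simp add: algebra_simps power2_eq_square)
    also have "\<dots> = fps_to_fls (uu Y (Suc (Suc n)))"
      using Suc.IH assms by (simp add: fls_times_fps_to_fls fps_to_fls_power)
    finally show ?case using Suc.IH by simp
  qed
  thus ?thesis by simp
qed

lemma cheb_sum: "n \<ge> 1 \<Longrightarrow> (\<Sum>m<n. chebU m (z::'a::comm_ring_1)) * (2*z - 2) = chebU n z - chebU (n-1) z - 1"
proof (induction n rule: dec_induct)
  case base show ?case by simp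
next
  case (step n)
  then obtain m where n: "n = Suc m" by (cases n) auto
  show ?case using step.IH unfolding n by (simp add: algebra_simps)
qed

lemma uniq:
  fixes D :: "nat \<Rightarrow> ratfun fls" and y :: "ratfun fls"
  assumes fin: "finite I" and out: "\<And>j. j \<notin> I \<Longrightarrow> D j = 0"
    and rec: "\<And>j. j \<in> I \<Longrightarrow> D j = y * (D (j-1) + D j + D (j+1))"
    and y: "y \<noteq> 0" "fls_subdegree y \<ge> 1"
  shows "D j = 0"
proof (rule ccontr)
  assume "D j \<noteq> 0"
  define S where "S = {j\<in>I. D j \<noteq> 0}"
  have jS: "j \<in> S" using \<open>D j \<noteq> 0\<close> out unfolding S_def by blast
  have finS: "finite S" using fin unfolding S_def by simp
  define m where "m = Min ((\<lambda>j. fls_subdegree (D j)) ` S)"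
  have "m \<in> (\<lambda>j. fls_subdegree (D j)) ` S"
    unfolding m_def using finS jS by (intro Min_in) auto
  then obtain j0 where j0: "j0 \<in> S" "fls_subdegree (D j0) = m" by auto
  have le: "D i \<noteq> 0 \<Longrightarrow> m \<le> fls_subdegree (D i)" for i
  proof -
    assume "D i \<noteq> 0"
    hence "i \<in> S" using out unfolding S_def by blast
    thus ?thesis unfolding m_def using finS by simp
  qed
  define E where "E = D (j0-1) + D j0 + D (j0+1)"
  have Dj0: "D j0 = y * E" unfolding E_def using rec j0(1) unfolding S_def by blast
  have D0: "D j0 \<noteq> 0" using j0 unfolding S_def by blast
  hence "E \<noteq> 0" using Dj0 by auto
  have z: "fls_nth (D i) n = 0" if "n < m" for i n
  proof (cases "D i = 0")
    case False thus ?thesis using le[OF False] that by simp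
  qed simp
  have "m \<le> fls_subdegree E"
    by (rule fls_subdegree_geI[OF \<open>E \<noteq> 0\<close>]) (simp add: E_def z)
  hence "fls_subdegree (D j0) \<ge> 1 + m" using Dj0 y \<open>E \<noteq> 0\<close> by simp
  thus False using j0 by simp
qed

lemma V_alg:
  fixes y c0 R Rm Rp Q :: "'a::field"
  assumes "y * (Rm + Rp) = (1 - y) * R" "c0 * (1 - 3*y) = 1" "Q \<noteq> 0"
  shows "c0 * (1 - R / Q) = 1 + y * (c0 * (1 - Rm / Q) + c0 * (1 - R / Q) + c0 * (1 - Rp / Q))"
proof -
  have "c0 * (Q - R) = Q + y * (c0 * (Q - Rm) + c0 * (Q - R) + c0 * (Q - Rp))"
  proof -
    have "Q + y * (c0 * (Q - Rm) + c0 * (Q - R) + c0 * (Q - Rp)) = Q + 3*y*c0*Q - c0*(y*R + y*(Rm+Rp))"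
      by (simp add: algebra_simps)
    also have "\<dots> = Q + 3*y*c0*Q - c0*R" using assms(1) by (simp add: algebra_simps)
    also have "\<dots> = c0*(1-3*y)*Q + 3*y*c0*Q - c0*R" using assms(2) by simp
    also have "\<dots> = c0 * (Q - R)" by (simp add: algebra_simps)
    finally show ?thesis by simp
  qed
  moreover have "c0 * (1 - R / Q) = c0 * (Q - R) / Q" using assms(3) by (simp add: field_simps)
  moreover have "1 + y * (c0 * (1 - Rm / Q) + c0 * (1 - R / Q) + c0 * (1 - Rp / Q)) =
     (Q + y * (c0 * (Q - Rm) + c0 * (Q - R) + c0 * (Q - Rp))) / Q"
    using assms(3) by (simp add: field_simps)
  ultimately show ?thesis by simp
qed

theorem theorem1:
  fixes k :: nat
  assumes "k \<ge> 2"
  defines "x \<equiv> (fls_X :: ratfun fls)"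
      and "t \<equiv> fls_const tvar"
  defines "\<phi> \<equiv> (1 - x * (t - 1)) / (2 * x * (t - 1))"
  defines "\<gamma> \<equiv> of_nat k / (1 - 3 * x * (t - 1))
              - (2 * x * (t - 1)) / (1 - 3 * x * (t - 1)) ^ 2
                * ((chebU k \<phi> - chebU (k - 1) \<phi> - 1) / chebU k \<phi>)"
  shows "Fk k = 1 / (1 - x * \<gamma>)"
proof -
  define Y where "Y = fps_X * fps_const (tvar - 1)"
  define y where "y = x * (t - 1)"
  have yY: "y = fps_to_fls Y"
  proof -
    have "t - 1 = fls_const (tvar - 1)" unfolding t_def by (intro fls_eqI) simp
    thus ?thesis unfolding y_def Y_def x_def by (simp add: fls_times_fps_to_fls)
  qed
  have Y0: "Y $ 0 = 0" unfolding Y_def by simp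
  have t1: "t - 1 \<noteq> 0"
  proof
    assume "t - 1 = 0"
    hence "t = 1" by simp
    hence "tvar = 1" unfolding t_def by simp
    thus False using tvar_ne1 by simp
  qed
  have ynz: "y \<noteq> 0" unfolding y_def x_def using t1 by simp
  have ysub: "fls_subdegree y \<ge> 1"
  proof -
    have "t - 1 = fls_const (tvar - 1)" unfolding t_def by (intro fls_eqI) simp
    thus ?thesis unfolding y_def x_def using t1 by simp
  qed
  have "2 * x * (t - 1) = 2 * y" unfolding y_def by (simp add: mult.assoc)
  hence "\<phi> = (1 - y) / (2 * y)" unfolding \<phi>_def y_def by simp
  hence phiy: "2 * \<phi> * y = 1 - y" using ynz by simp
  have 13: "1 - 3 * y \<noteq> 0"
  proof -
    have "1 - 3 * y = fps_to_fls (1 - 3 * Y)" unfolding yY by (simp add: fls_times_fps_to_fls)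
    moreover have n1: "(1 - 3 * Y) $ 0 = 1" using Y0 by simp
    have "1 - 3 * Y \<noteq> 0"
    proof
      assume "1 - 3 * Y = 0"
      hence "(1 - 3 * Y) $ 0 = 0" by (simp only: fps_zero_nth)
      with n1 show False by simp
    qed
    ultimately show ?thesis by simp
  qed
  have Unz: "chebU n \<phi> \<noteq> 0" for n
  proof
    assume "chebU n \<phi> = 0"
    hence "fps_to_fls (uu Y n) = 0" using cheb_scaled[of \<phi> Y n] phiy unfolding yY by simp
    hence "uu Y n = 0" by simp
    thus False using uu_nth0[OF Y0, of n] by simp
  qed
  define c0 where "c0 = 1 / (1 - 3 * y)"
  have c0: "c0 * (1 - 3 * y) = 1" unfolding c0_def using 13 by simp
  define P where "P m = (if m = 0 then 0 else chebU (m - 1) \<phi>)" for m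
  have Prec: "P (Suc (Suc m)) = 2 * \<phi> * P (Suc m) - P m" for m
    unfolding P_def by (cases m) auto
  define V where "V j = c0 * (1 - (P j + P (k + 1 - j)) / P (k + 1))" for j
  have PK: "P (k+1) \<noteq> 0" unfolding P_def using Unz by simp
  have V0: "V 0 = 0" "V (k+1) = 0" unfolding V_def using PK by (simp_all add: P_def)
  have VR: "V j = 1 + y * (V (j-1) + V j + V (j+1))" if j: "j \<in> {1..k}" for j
  proof -
    obtain j' where j': "j = Suc j'" using j by (cases j) auto
    obtain m where m: "k - j = m" by simp
    have e1: "k + 1 - (j - 1) = Suc (Suc m)" "k + 1 - j = Suc m" "k + 1 - (j+1) = m"
      using j m by auto
    have A: "P (j - 1) + P (j + 1) = 2 * \<phi> * P j" unfolding j' using Prec[of j'] by simp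
    have B: "P (k + 1 - (j - 1)) + P (k + 1 - (j+1)) = 2 * \<phi> * P (k + 1 - j)"
      unfolding e1 using Prec[of m] by simp
    have "y * ((P (j-1) + P (k+1-(j-1))) + (P (j+1) + P (k+1-(j+1)))) = y * ((P (j-1) + P (j+1)) + (P (k+1-(j-1)) + P (k+1-(j+1))))"
      by (simp add: algebra_simps)
    also have "\<dots> = y * (2 * \<phi> * P j + 2 * \<phi> * P (k + 1 - j))" by (simp only: A B)
    also have "\<dots> = (2 * \<phi> * y) * (P j + P (k+1-j))" by (simp add: algebra_simps)
    also have "\<dots> = (1 - y) * (P j + P (k+1-j))" by (simp only: phiy)
    finally have "y * ((P (j-1) + P (k+1-(j-1))) + (P (j+1) + P (k+1-(j+1)))) = (1 - y) * (P j + P (k+1-j))" .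
    from V_alg[OF this c0 PK] show ?thesis unfolding V_def by simp
  qed
  define G where "G i = fps_to_fls (Gf k i)" for i
  define F where "F = Fk k"
  have GR: "G i = x * F + y * (G (i-1) + G i + G (i+1))" if "i \<in> {1..k}" for i
  proof -
    have "t - 1 = fls_const (tvar - 1)" unfolding t_def by (intro fls_eqI) simp
    thus ?thesis using arg_cong[OF Gf_rec[OF that], of fps_to_fls]
      unfolding G_def F_def Fk_Af y_def x_def by (simp add: fls_times_fps_to_fls mult.assoc)
  qed
  have Gout: "i \<notin> {1..k} \<Longrightarrow> G i = 0" for i
  proof -
    assume "i \<notin> {1..k}"
    hence "Abs_fps (cc k i) = 0" by (intro fps_ext) (simp add: cc_out)
    thus ?thesis unfolding G_def Gf_def by simp
  qed
  have FS: "F = 1 + (\<Sum>i\<in>{1..k}. G i)"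
    unfolding F_def Fk_Af Af_eq G_def by (simp add: fps_to_fls_sum)
  define D where "D j = (if j \<in> {1..k} then G j - x * F * V j else 0)" for j
  have DR: "D j = y * (D (j-1) + D j + D (j+1))" if j: "j \<in> {1..k}" for j
  proof -
    have ex: "G i - x * F * V i = D i" if "i \<in> {0..k+1}" for i
    proof (cases "i \<in> {1..k}")
      case True thus ?thesis unfolding D_def by simp
    next
      case False
      hence "i = 0 \<or> i = k+1" using that by auto
      thus ?thesis using False V0 Gout[OF False] unfolding D_def by auto
    qed
    have "D j = G j - x * F * V j" using j unfolding D_def by simp
    also have "\<dots> = y * ((G (j-1) - x*F*V (j-1)) + (G j - x*F*V j) + (G (j+1) - x*F*V (j+1)))"
      by (subst GR[OF j], subst VR[OF j]) (simp add: algebra_simps)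
    also have "\<dots> = y * (D (j-1) + D j + D (j+1))"
    proof -
      have "j - 1 \<in> {0..k+1}" "j \<in> {0..k+1}" "j + 1 \<in> {0..k+1}" using j by auto
      thus ?thesis by (simp only: ex)
    qed
    finally show ?thesis .
  qed
  have D0: "D j = 0" for j
  proof -
    have o: "D i = 0" if "i \<notin> {1..k}" for i using that unfolding D_def by auto
    show ?thesis using uniq[of "{1..k}" D y j, OF _ o DR ynz ysub] by simp
  qed
  have GV: "G j = x * F * V j" if "j \<in> {1..k}" for j
    using D0[of j] that unfolding D_def by simp
  define g where "g = (\<Sum>j\<in>{1..k}. V j)"
  have "F = 1 + x * F * g"
    unfolding FS[symmetric] g_def sum_distrib_left using GV by (subst FS) simp
  hence Fg: "F * (1 - x * g) = 1" by (simp add: algebra_simps)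
  hence "1 - x * g \<noteq> 0" by auto
  hence Fres: "F = 1 / (1 - x * g)" using Fg by (simp add: field_simps)
  define Q where "Q = chebU k \<phi>"
  define N where "N = chebU k \<phi> - chebU (k - 1) \<phi> - 1"
  define S where "S = (\<Sum>m<k. chebU m \<phi>)"
  have QP: "P (k+1) = Q" unfolding P_def Q_def by simp
  have S1: "(\<Sum>j\<in>{1..k}. P j) = S"
    unfolding S_def using sum.atLeast1_atMost_eq[of P k] by (simp add: P_def)
  have S2: "(\<Sum>j\<in>{1..k}. P (k + 1 - j)) = S"
    using sum.atLeastAtMost_rev[of P 1 k] S1 by simp
  have SN: "S * (2 * \<phi> - 2) = N" unfolding S_def N_def using cheb_sum[of k \<phi>] assms(1) by simp
  have "(2 * \<phi> - 2) * y = 1 - 3 * y" using phiy by (simp add: algebra_simps)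
  hence "S * (1 - 3 * y) = N * y" using SN by (metis mult.assoc)
  hence Sy: "S = N * y * c0" unfolding c0_def using 13 by (simp add: field_simps)
  have "g = (\<Sum>j\<in>{1..k}. c0 - (c0 / Q) * (P j + P (k + 1 - j)))"
    unfolding g_def V_def QP by (rule sum.cong) (simp_all add: algebra_simps add_divide_distrib)
  also have "\<dots> = of_nat k * c0 - (c0 / Q) * (S + S)"
  proof -
    have "(\<Sum>j\<in>{1..k}. (c0 / Q) * (P j + P (k + 1 - j))) = (c0 / Q) * ((\<Sum>j\<in>{1..k}. P j) + (\<Sum>j\<in>{1..k}. P (k + 1 - j)))"
      by (simp add: sum.distrib sum_distrib_left distrib_left)
    thus ?thesis by (simp only: sum_subtractf S1 S2) simp
  qed
  also have "\<dots> = of_nat k * c0 - 2 * y * c0 ^ 2 * (N / Q)"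
    unfolding Sy by (simp add: power2_eq_square algebra_simps)
  also have "\<dots> = \<gamma>"
  proof -
    have "1 - 3 * x * (t - 1) = 1 - 3 * y" "2 * x * (t - 1) = 2 * y" unfolding y_def by (simp_all add: mult.assoc)
    hence "\<gamma> = of_nat k / (1 - 3 * y) - (2 * y) / (1 - 3 * y) ^ 2 * (N / Q)"
      unfolding \<gamma>_def N_def Q_def by (simp only:)
    thus ?thesis unfolding c0_def by (simp add: power_one_over)
  qed
  finally have "g = \<gamma>" .
  thus ?thesis using Fres unfolding F_def by simp
qed
end
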